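(* Let $T=\bigoplus_{i=1}^{n-1}T_i$ be a basic maximal rigid object in $\mathcal{C}_n$ and $T_k$ one of its indecomposable summands. (i) Exactly $\operatorname{ql}T_k$ of the indecomposable summands of $T$ lie in $\mathcal{W}_{T_k}$. (ii) If $\operatorname{ql}T_k>1$, there is a subwing triple $(T_k;T_{k'},T_{k''})$ such that each of $T_{k'},T_{k''}$ is either a summand of $T$ or zero, all indecomposable summands of $T$ other than $T_k$ that lie in $\mathcal{W}_{T_k}$ lie in $\mathcal{W}_{T_{k'}}\cup\mathcal{W}_{T_{k''}}$, and exactly $\operatorname{ql}T_{k'}$ of them lie in $\mathcal{W}_{T_{k'}}$ and exactly $\operatorname{ql}T_{k''}$ lie in $\mathcal{W}_{T_{k''}}$.
   Context: Let $k$ be algebraically closed, $n\ge2$, $\mathcal{T}_n$ the tube of rank $n$ (finite-dimensional nilpotent representations of the cyclically oriented $\tilde A_{n-1}$-quiver; AR-translation $\tau$), $\mathcal{C}_n=D^b(\mathcal{T}_n)/\tau^{-1}[1]$ the cluster tube, with indecomposables identified with those of $\mathcal{T}_n$. Indecomposables have coordinates $(a,b)$, $a\in\mathbb{Z}/n$, $b\ge1$ the quasilength $\operatorname{ql}$, with $\tau(a,b)=(a-1,b)$ and irreducible maps $(a,b)\to(a,b+1)$ and $(a,b)\to(a+1,b-1)$. For $X=(a,i)$, $i\le n-1$, the wing $\mathcal{W}_X$ is $\{(a+s,i'):s\ge0,i'\ge1,s+i'\le i\}$; $\mathcal{W}_0=\emptyset$ and $\operatorname{ql}0=0$. $T$ is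 maximal rigid if $\operatorname{Ext}^1_{\mathcal{C}_n}(T,T)=0$ and $\operatorname{Ext}^1(T\oplus X,T\oplus X)=0$ implies $X\in\operatorname{add}T$; a basic maximal rigid object has $n-1$ pairwise non-isomorphic indecomposable summands, a unique one (the top summand) of quasilength $n-1$, and all lie in its wing. A non-degenerate subwing triple $(X;Y,Z)$: $X=(a,b)$ with $3\le b\le n-1$, $Y=(a,c)$, $Z=(a+c+1,b-c-1)$ for some $1\le c\le b-2$. A degenerate subwing triple $(X;Y,Z)$: $X=(a,b)$, $2\le b\le n-1$, and either $Y=(a,b-1)$, $Z=0$, or $Y=0$, $Z=(a+1,b-1)$. *)

theory Defs
  imports Main
begin

text \<open>Indecomposables of the tube T_n (and of the cluster tube C_n): pairs (a,b),
  a in {0..<n} representing Z/n, b \<ge> 1 the quasilength.  The indecomposable (a,b)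
  is the uniserial module with socle S_a and composition factors
  S_a, S_(a+1), ..., S_(a+b-1) (indices mod n) from socle to top; this matches
  the irreducible maps (a,b) -> (a,b+1) (mono) and (a,b) -> (a+1,b-1) (epi).
  The zero object is encoded as None in the type (nat \<times> nat) option.\<close>

definition indec :: "nat \<Rightarrow> (nat \<times> nat) set" where
  "indec n = {(a,b). a < n \<and> 1 \<le> b}"

definition ql :: "nat \<times> nat \<Rightarrow> nat" where
  "ql X = snd X"

definition tau :: "nat \<Rightarrow> nat \<times> nat \<Rightarrow> nat \<times> nat" where
  "tau n X = ((fst X + n - 1) mod n, snd X)"

text \<open>dim_k Hom_T((a,b),(c,d)) for uniserial modules over the tube: nonzero maps
  factor through a common quotient of (a,b) / submodule of (c,d) of length j,
  which exists iff c + j = a + b mod n; each gives a one-dimensional piece.\<close>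

definition hom_dim :: "nat \<Rightarrow> nat \<times> nat \<Rightarrow> nat \<times> nat \<Rightarrow> nat" where
  "hom_dim n X Y =
     card {j. 1 \<le> j \<and> j \<le> min (snd X) (snd Y) \<and>
              (fst X + snd X) mod n = (fst Y + j) mod n}"

text \<open>Auslander-Reiten formula in T_n: Ext^1_T(X,Y) = D Hom_T(Y, tau X).\<close>
definition ext_tube_dim :: "nat \<Rightarrow> nat \<times> nat \<Rightarrow> nat \<times> nat \<Rightarrow> nat" where
  "ext_tube_dim n X Y = hom_dim n Y (tau n X)"

text \<open>In the cluster tube: Ext^1_C(X,Y) = Ext^1_T(X,Y) \<oplus> D Ext^1_T(Y,X).\<close>
definition ext_C_dim :: "nat \<Rightarrow> nat \<times> nat \<Rightarrow> nat \<times> nat \<Rightarrow> nat" where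
  "ext_C_dim n X Y = ext_tube_dim n X Y + ext_tube_dim n Y X"

text \<open>A basic object is a finite set of indecomposables; Ext^1 is additive, so
  Ext^1_C(T,T) = 0 iff it vanishes on all pairs of summands.\<close>
definition rigid :: "nat \<Rightarrow> (nat \<times> nat) set \<Rightarrow> bool" where
  "rigid n T \<longleftrightarrow> T \<subseteq> indec n \<and> finite T \<and>
     (\<forall>X\<in>T. \<forall>Y\<in>T. ext_C_dim n X Y = 0)"

definition maximal_rigid :: "nat \<Rightarrow> (nat \<times> nat) set \<Rightarrow> bool" where
  "maximal_rigid n T \<longleftrightarrow> rigid n T \<and>
     (\<forall>X. X \<subseteq> indec n \<and> finite X \<and> rigid n (T \<union> X) \<longrightarrow> X \<subseteq> T)"

definition wing :: "nat \<Rightarrow> nat \<times> nat \<Rightarrow> (nat \<times> nat) set" where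
  "wing n X = {((fst X + s) mod n, i') | s i'. 1 \<le> i' \<and> s + i' \<le> snd X}"

definition wing0 :: "nat \<Rightarrow> (nat \<times> nat) option \<Rightarrow> (nat \<times> nat) set" where
  "wing0 n Y = (case Y of None \<Rightarrow> {} | Some X \<Rightarrow> wing n X)"

definition ql0 :: "(nat \<times> nat) option \<Rightarrow> nat" where
  "ql0 Y = (case Y of None \<Rightarrow> 0 | Some X \<Rightarrow> ql X)"

definition nondeg_subwing_triple ::
  "nat \<Rightarrow> nat \<times> nat \<Rightarrow> (nat \<times> nat) option \<Rightarrow> (nat \<times> nat) option \<Rightarrow> bool" where
  "nondeg_subwing_triple n X Y Z \<longleftrightarrow>
     (let a = fst X; b = snd X in
       3 \<le> b \<and> b \<le> n - 1 \<and>
       (\<exists>c. 1 \<le> c \<and> c \<le> b - 2 \<and> Y = Some (a, c) \<and>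
            Z = Some ((a + c + 1) mod n, b - c - 1)))"

definition deg_subwing_triple ::
  "nat \<Rightarrow> nat \<times> nat \<Rightarrow> (nat \<times> nat) option \<Rightarrow> (nat \<times> nat) option \<Rightarrow> bool" where
  "deg_subwing_triple n X Y Z \<longleftrightarrow>
     (let a = fst X; b = snd X in
       2 \<le> b \<and> b \<le> n - 1 \<and>
       ((Y = Some (a, b - 1) \<and> Z = None) \<or>
        (Y = None \<and> Z = Some ((a + 1) mod n, b - 1))))"

definition subwing_triple ::
  "nat \<Rightarrow> nat \<times> nat \<Rightarrow> (nat \<times> nat) option \<Rightarrow> (nat \<times> nat) option \<Rightarrow> bool" where
  "subwing_triple n X Y Z \<longleftrightarrow>
     nondeg_subwing_triple n X Y Z \<or> deg_subwing_triple n X Y Z"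

definition summand_or_zero :: "(nat \<times> nat) set \<Rightarrow> (nat \<times> nat) option \<Rightarrow> bool" where
  "summand_or_zero T Y \<longleftrightarrow> (case Y of None \<Rightarrow> True | Some X \<Rightarrow> X \<in> T)"

end

theory Submission
  imports Defs "HOL-Number_Theory.Cong"
begin


definition cr :: "nat \<times> nat \<Rightarrow> nat \<times> nat \<Rightarrow> bool" where
  "cr x y \<longleftrightarrow> fst y < fst x \<and> fst x \<le> fst y + snd y \<and> fst y + snd y < fst x + snd x"

definition compat :: "nat \<times> nat \<Rightarrow> nat \<times> nat \<Rightarrow> bool" where
  "compat x y \<longleftrightarrow> \<not> cr x y \<and> \<not> cr y x"

definition Win :: "nat \<Rightarrow> nat \<Rightarrow> (nat \<times> nat) set" where
  "Win p L = {x. p \<le> fst x \<and> 1 \<le> snd x \<and> fst x + snd x \<le> p + L}"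

definition relmax :: "(nat \<times> nat) set \<Rightarrow> nat \<Rightarrow> nat \<Rightarrow> bool" where
  "relmax F p L \<longleftrightarrow> F \<subseteq> Win p L \<and> (\<forall>x\<in>F. \<forall>y\<in>F. compat x y) \<and>
     (\<forall>y\<in>Win p L. (\<forall>x\<in>F. compat x y) \<longrightarrow> y \<in> F)"

lemma finite_Win: "finite (Win p L)"
proof -
  have "Win p L \<subseteq> {..p+L} \<times> {..p+L}" by (auto simp: Win_def)
  then show ?thesis by (rule finite_subset) auto
qed

lemma compat_out:
  assumes "compat x (q,M)" "x \<notin> Win q M" "y \<in> Win q M" "1 \<le> snd x"
  shows "compat x y"
  using assms by (cases x, cases y) (auto simp: compat_def cr_def Win_def)

lemma Win_mono: "(q,M) \<in> Win p L \<Longrightarrow> y \<in> Win q M \<Longrightarrow> y \<in> Win p L"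
  by (auto simp: Win_def)

lemma relmax_restrict:
  assumes "relmax F p L" "(q,M) \<in> F"
  shows "relmax (F \<inter> Win q M) q M"
  unfolding relmax_def
proof (intro conjI ballI impI)
  show "F \<inter> Win q M \<subseteq> Win q M" by auto
  show "compat x y" if "x \<in> F \<inter> Win q M" "y \<in> F \<inter> Win q M" for x y
    using assms that by (auto simp: relmax_def)
  fix y assume y: "y \<in> Win q M" and h: "\<forall>x\<in>F \<inter> Win q M. compat x y"
  have qM: "(q,M) \<in> Win p L" using assms by (auto simp: relmax_def)
  have "y \<in> Win p L" using Win_mono[OF qM y] .
  moreover have "compat x y" if x: "x \<in> F" for x
  proof (cases "x \<in> Win q M")
    case True then show ?thesis using h x by auto
  next
    case False
    have "compat x (q,M)" using assms x by (auto simp: relmax_def)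
    moreover have "1 \<le> snd x" using assms x by (auto simp: relmax_def Win_def)
    ultimately show ?thesis using compat_out False y by blast
  qed
  ultimately have "y \<in> F" using assms(1) by (auto simp: relmax_def)
  then show "y \<in> F \<inter> Win q M" using y by auto
qed

lemma struct:
  assumes rm: "relmax F p L" and top: "(p,L) \<in> F" and L2: "2 \<le> L"
  shows "(\<exists>c. 1 \<le> c \<and> c \<le> L - 2 \<and> (p,c) \<in> F \<and> (p+c+1, L-c-1) \<in> F \<and>
            F - {(p,L)} \<subseteq> Win p c \<union> Win (p+c+1) (L-c-1)) \<or>
         ((p, L-1) \<in> F \<and> F - {(p,L)} \<subseteq> Win p (L-1)) \<or>
         ((p+1, L-1) \<in> F \<and> F - {(p,L)} \<subseteq> Win (p+1) (L-1))"
proof -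
  have sub: "F \<subseteq> Win p L" and pw: "\<And>x y. x \<in> F \<Longrightarrow> y \<in> F \<Longrightarrow> compat x y"
    and mx: "\<And>y. y \<in> Win p L \<Longrightarrow> (\<And>x. x \<in> F \<Longrightarrow> compat x y) \<Longrightarrow> y \<in> F"
    using rm by (auto simp: relmax_def)
  define C where "C = {c. (p,c) \<in> F \<and> c < L}"
  have finC: "finite C" unfolding C_def by (rule finite_subset[of _ "{..<L}"]) auto
  show ?thesis
  proof (cases "C = {}")
    case True
    have inF: "(p,c) \<in> F \<Longrightarrow> c = L" for c
    proof -
      assume a: "(p,c) \<in> F"
      then have "c \<le> L" using sub by (auto simp: Win_def)
      moreover have "\<not> c < L" using True a unfolding C_def by auto
      ultimately show ?thesis by simp
    qed
    have cov: "x \<in> Win (p+1) (L-1)" if "x \<in> F" "x \<noteq> (p,L)" for x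
    proof -
      obtain s i where x: "x = (s,i)" by (cases x)
      have "s \<noteq> p" using inF that x by auto
      then show ?thesis using that sub x L2 by (auto simp: Win_def)
    qed
    have "(p+1, L-1) \<in> F"
    proof (rule mx)
      show "(p+1, L-1) \<in> Win p L" using L2 by (auto simp: Win_def)
      fix x assume x: "x \<in> F"
      show "compat x (p+1, L-1)"
      proof (cases "x = (p,L)")
        case True then show ?thesis using L2 by (auto simp: compat_def cr_def)
      next
        case False
        then have "x \<in> Win (p+1) (L-1)" using cov x by auto
        then show ?thesis using L2 by (cases x) (auto simp: compat_def cr_def Win_def)
      qed
    qed
    then show ?thesis using cov by blast
  next
    case False
    define c where "c = Max C"
    have cC: "c \<in> C" using False finC unfolding c_def by auto
    have cmax: "\<And>d. d \<in> C \<Longrightarrow> d \<le> c" using finC unfolding c_def by auto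
    have pc: "(p,c) \<in> F" "c < L" using cC unfolding C_def by auto
    have c1: "1 \<le> c" using pc sub by (auto simp: Win_def)
    have left: "(s,i) \<in> F \<Longrightarrow> (s,i) \<noteq> (p,L) \<Longrightarrow> s = p \<Longrightarrow> i \<le> c" for s i
    proof -
      assume a: "(s,i) \<in> F" "(s,i) \<noteq> (p,L)" "s = p"
      then have "i \<le> L" using sub by (auto simp: Win_def)
      with a have "i < L" by auto
      with a have "i \<in> C" unfolding C_def by auto
      then show ?thesis using cmax by auto
    qed
    have other: "(s,i) \<in> F \<Longrightarrow> p < s \<Longrightarrow> s + i \<le> p + c \<or> p + c < s" for s i
    proof -
      assume a: "(s,i) \<in> F" "p < s"
      then have "compat (s,i) (p,c)" using pw pc by auto
      then show ?thesis using a by (auto simp: compat_def cr_def)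
    qed
    show ?thesis
    proof (cases "c = L - 1")
      case True
      have "F - {(p,L)} \<subseteq> Win p (L-1)"
      proof
        fix x assume x: "x \<in> F - {(p,L)}"
        obtain s i where xs: "x = (s,i)" by (cases x)
        have w: "p \<le> s" "1 \<le> i" "s + i \<le> p + L" using sub x xs by (auto simp: Win_def)
        show "x \<in> Win p (L-1)"
        proof (cases "s = p")
          case True then show ?thesis using left[of s i] x xs w `c = L - 1` by (auto simp: Win_def)
        next
          case False then show ?thesis using other[of s i] x xs w `c = L - 1` by (auto simp: Win_def)
        qed
      qed
      then show ?thesis using pc True by auto
    next
      case False
      then have cL: "c \<le> L - 2" using pc by auto
      have cov: "x \<in> Win p c \<union> Win (p+c+1) (L-c-1)" if x: "x \<in> F - {(p,L)}" for x
      proof -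
        obtain s i where xs: "x = (s,i)" by (cases x)
        have w: "p \<le> s" "1 \<le> i" "s + i \<le> p + L" using sub x xs by (auto simp: Win_def)
        show ?thesis
        proof (cases "s = p")
          case True then show ?thesis using left[of s i] x xs w by (auto simp: Win_def)
        next
          case False then show ?thesis using other[of s i] x xs w cL by (auto simp: Win_def)
        qed
      qed
      have "(p+c+1, L-c-1) \<in> F"
      proof (rule mx)
        show "(p+c+1, L-c-1) \<in> Win p L" using cL L2 by (auto simp: Win_def)
        fix x assume x: "x \<in> F"
        show "compat x (p+c+1, L-c-1)"
        proof (cases "x = (p,L)")
          case True then show ?thesis using cL by (auto simp: compat_def cr_def)
        next
          case False
          then have "x \<in> Win p c \<union> Win (p+c+1) (L-c-1)" using cov x by auto
          then show ?thesis using cL by (cases x) (auto simp: compat_def cr_def Win_def)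
        qed
      qed
      then show ?thesis using pc c1 cL cov by blast
    qed
  qed
qed

lemma card_relmax:
  "relmax F p L \<Longrightarrow> (p,L) \<in> F \<Longrightarrow> card F = L"
proof (induction L arbitrary: F p rule: less_induct)
  case (less L)
  have sub: "F \<subseteq> Win p L" using less.prems by (auto simp: relmax_def)
  have finF: "finite F" using finite_subset[OF sub finite_Win] .
  have L1: "1 \<le> L" using less.prems sub by (auto simp: Win_def)
  show ?case
  proof (cases "L = 1")
    case True
    have "F = {(p,1)}" using sub less.prems True by (auto simp: Win_def)
    then show ?thesis using True by simp
  next
    case False
    then have L2: "2 \<le> L" using L1 by simp
    have pn: "(p,L) \<notin> Win q M" if "M < L" for q M using that by (auto simp: Win_def)
    have IH: "card (F \<inter> Win q M) = M" if "(q,M) \<in> F" "M < L" for q M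
      using less.IH[OF that(2) relmax_restrict[OF less.prems(1) that(1)]] that(1) sub
      by (auto simp: Win_def)
    from struct[OF less.prems L2] show ?thesis
    proof (elim disjE exE conjE)
      fix c assume c: "1 \<le> c" "c \<le> L - 2" "(p,c) \<in> F" "(p+c+1, L-c-1) \<in> F"
        and cv: "F - {(p,L)} \<subseteq> Win p c \<union> Win (p+c+1) (L-c-1)"
      have eq: "F = insert (p,L) ((F \<inter> Win p c) \<union> (F \<inter> Win (p+c+1) (L-c-1)))"
        using cv less.prems by auto
      have dj: "(F \<inter> Win p c) \<inter> (F \<inter> Win (p+c+1) (L-c-1)) = {}" by (auto simp: Win_def)
      have "card F = Suc (card ((F \<inter> Win p c) \<union> (F \<inter> Win (p+c+1) (L-c-1))))"
        by (subst eq, rule card_insert_disjoint) (use finF pn c in \<open>auto\<close>)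
      also have "\<dots> = Suc (c + (L-c-1))"
        using card_Un_disjoint[OF _ _ dj] finF IH[OF c(3)] IH[OF c(4)] c by auto
      finally show ?thesis using c by simp
    next
      assume a: "(p, L-1) \<in> F" "F - {(p,L)} \<subseteq> Win p (L-1)"
      have eq: "F = insert (p,L) (F \<inter> Win p (L-1))" using a less.prems by auto
      have "card F = Suc (card (F \<inter> Win p (L-1)))"
        by (subst eq, rule card_insert_disjoint) (use finF pn L2 in \<open>auto\<close>)
      then show ?thesis using IH[OF a(1)] L2 by simp
    next
      assume a: "(p+1, L-1) \<in> F" "F - {(p,L)} \<subseteq> Win (p+1) (L-1)"
      have eq: "F = insert (p,L) (F \<inter> Win (p+1) (L-1))" using a less.prems by auto
      have "card F = Suc (card (F \<inter> Win (p+1) (L-1)))"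
        by (subst eq, rule card_insert_disjoint) (use finF pn L2 in \<open>auto\<close>)
      then show ?thesis using IH[OF a(1)] L2 by simp
    qed
  qed
qed



definition phi :: "nat \<Rightarrow> nat \<Rightarrow> nat \<times> nat \<Rightarrow> nat \<times> nat" where
  "phi n a x = ((a + fst x) mod n, snd x)"

definition E :: "nat \<Rightarrow> nat \<times> nat \<Rightarrow> nat \<times> nat \<Rightarrow> bool" where
  "E n x y \<longleftrightarrow> (\<exists>j. 1 \<le> j \<and> j \<le> min (snd x) (snd y) \<and>
      (fst y + snd y + 1) mod n = (fst x + j) mod n)"

lemma mod_cases2:
  fixes x y n :: nat
  assumes "x < 2*n" "y < 2*n" "x mod n = y mod n"
  shows "x = y \<or> x = y + n \<or> y = x + n"
proof (cases "y \<le> x")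
  case True
  then have "n dvd x - y" using assms(3) mod_eq_dvd_iff_nat by blast
  then obtain k where k: "x - y = n * k" by auto
  have "k < 2"
  proof (rule ccontr)
    assume "\<not> k < 2"
    then have "n * 2 \<le> n * k" by simp
    then show False using k assms(1) True by linarith
  qed
  then have "k = 0 \<or> k = 1" by auto
  then show ?thesis using k True by auto
next
  case False
  then have "n dvd y - x" using assms(3) mod_eq_dvd_iff_nat[of x y n] by simp
  then obtain k where k: "y - x = n * k" by auto
  have "k < 2"
  proof (rule ccontr)
    assume "\<not> k < 2"
    then have "n * 2 \<le> n * k" by simp
    then show False using k assms(2) False by linarith
  qed
  then have "k = 0 \<or> k = 1" by auto
  then show ?thesis using k False by auto
qed

lemma mod_shift_eq:
  fixes n a x y :: nat
  assumes "0 < n"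
  shows "((a + x) mod n + y) mod n = (((a + u) mod n + n - 1) mod n + j) mod n
     \<longleftrightarrow> (x + y + 1) mod n = (u + j) mod n"
proof -
  have l: "((a + x) mod n + y) mod n = (a + x + y) mod n" by (simp add: mod_simps)
  have r: "(((a + u) mod n + n - 1) mod n + j) mod n = (a + u + (n - 1) + j) mod n"
  proof -
    have "(a + u) mod n + n - 1 = (a + u) mod n + (n - 1)" using assms by simp
    then show ?thesis by (simp add: mod_simps)
  qed
  have c1: "(a + x + y) mod n = (a + u + (n - 1) + j) mod n
        \<longleftrightarrow> (a + x + y + 1) mod n = (a + u + (n - 1) + j + 1) mod n"
    using cong_add_rcancel_nat[of "a + x + y" 1 "a + u + (n - 1) + j" n] by (simp add: cong_def)
  have c2: "a + u + (n - 1) + j + 1 = (a + u + j) + n" using assms by simp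
  have c3: "(a + x + y + 1) mod n = (a + u + j) mod n \<longleftrightarrow> (x + y + 1) mod n = (u + j) mod n"
    using cong_add_lcancel_nat[of a "x + y + 1" "u + j" n] by (simp add: cong_def add.assoc)
  have "(a + x + y) mod n = (a + u + (n - 1) + j) mod n \<longleftrightarrow> (x + y + 1) mod n = (u + j) mod n"
    by (simp only: c1 c2 mod_add_self2 c3)
  then show ?thesis using l r by simp
qed

lemma ext_tube_phi:
  assumes "0 < n"
  shows "ext_tube_dim n (phi n a x) (phi n a y) = 0 \<longleftrightarrow> \<not> E n x y"
proof -
  define S where "S = {j. 1 \<le> j \<and> j \<le> min (snd y) (snd x) \<and>
     ((a + fst y) mod n + snd y) mod n = (((a + fst x) mod n + n - 1) mod n + j) mod n}"
  have e: "ext_tube_dim n (phi n a x) (phi n a y) = card S"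
    unfolding S_def ext_tube_dim_def hom_dim_def tau_def phi_def by simp
  have fin: "finite S" unfolding S_def by (rule finite_subset[of _ "{..snd y}"]) auto
  have "S = {j. 1 \<le> j \<and> j \<le> min (snd x) (snd y) \<and> (fst y + snd y + 1) mod n = (fst x + j) mod n}"
    unfolding S_def using mod_shift_eq[OF assms] by (auto simp: min_def)
  then have "S = {} \<longleftrightarrow> \<not> E n x y" unfolding E_def by auto
  then show ?thesis using e fin by simp
qed

lemma ext_C_phi:
  assumes "0 < n"
  shows "ext_C_dim n (phi n a x) (phi n a y) = 0 \<longleftrightarrow> \<not> E n x y \<and> \<not> E n y x"
  using ext_tube_phi[OF assms] unfolding ext_C_dim_def by simp

lemma ext_C_sym: "ext_C_dim n X Y = ext_C_dim n Y X"
  unfolding ext_C_dim_def by simp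

lemma E_lin:
  assumes "b < n" "x \<in> Win 0 b" "y \<in> Win 0 b"
  shows "E n x y \<longleftrightarrow> cr x y"
proof
  assume "E n x y"
  then obtain j where j: "1 \<le> j" "j \<le> min (snd x) (snd y)"
    "(fst y + snd y + 1) mod n = (fst x + j) mod n" unfolding E_def by auto
  have r: "fst y + snd y + 1 < 2*n" "fst x + j < 2*n" using assms j by (auto simp: Win_def)
  from mod_cases2[OF r j(3)] have "fst y + snd y + 1 = fst x + j" using assms j by (auto simp: Win_def)
  then show "cr x y" using j unfolding cr_def by auto
next
  assume c: "cr x y"
  define j where "j = fst y + snd y + 1 - fst x"
  have "1 \<le> j \<and> j \<le> min (snd x) (snd y) \<and> (fst y + snd y + 1) mod n = (fst x + j) mod n"
    using c unfolding j_def cr_def by auto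
  then show "E n x y" unfolding E_def by blast
qed

lemma E_out:
  assumes n: "b < n" and u: "u < n" and e: "1 \<le> e" "e < n" and ue: "b < u + e"
    and y: "y \<in> Win 0 b"
    and h1: "\<not> E n (0,b) (u,e)" and h2: "\<not> E n (u,e) (0,b)"
  shows "\<not> E n (u,e) y \<and> \<not> E n y (u,e)"
proof
  obtain s i where ys: "y = (s,i)" by (cases y)
  have w: "1 \<le> i" "s + i \<le> b" using y ys by (auto simp: Win_def)
  show "\<not> E n y (u,e)"
  proof
    assume "E n y (u,e)"
    then obtain j where j: "1 \<le> j" "j \<le> min i e" "(u + e + 1) mod n = (s + j) mod n"
      unfolding E_def ys by auto
    have r: "u + e + 1 < 2*n" "s + j < 2*n" using n u e j w by auto
    from mod_cases2[OF r j(3)] have "u + e + 1 = s + j + n" using ue j w by auto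
    then have "1 \<le> s + j \<and> s + j \<le> min b e \<and> (u + e + 1) mod n = (0 + (s + j)) mod n"
      using j w u by auto
    then have "E n (0,b) (u,e)" unfolding E_def by auto
    then show False using h1 by simp
  qed
  show "\<not> E n (u,e) y"
  proof
    assume "E n (u,e) y"
    then obtain j where j: "1 \<le> j" "j \<le> min e i" "(s + i + 1) mod n = (u + j) mod n"
      unfolding E_def ys by auto
    have r: "s + i + 1 < 2*n" "u + j < 2*n" using n u e j w by auto
    from mod_cases2[OF r j(3)] have eq: "s + i + 1 = u + j" using n u j w by auto
    define j0 where "j0 = b + 1 - u"
    have "1 \<le> j0 \<and> j0 \<le> min e b \<and> (b + 1) mod n = (u + j0) mod n"
      using eq j w ue unfolding j0_def by auto
    then have "E n (u,e) (0,b)" unfolding E_def by auto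
    then show False using h2 by simp
  qed
qed

lemma rigid_ql:
  assumes "0 < n" "z < n" "ext_C_dim n (z,e) (z,e) = 0"
  shows "e < n"
proof (rule ccontr)
  assume "\<not> e < n"
  have p: "phi n z (0,e) = (z,e)" using assms by (simp add: phi_def)
  have "1 \<le> e + 1 - n \<and> e + 1 - n \<le> min e e \<and> (0 + e + 1) mod n = (0 + (e + 1 - n)) mod n"
    using \<open>\<not> e < n\<close> assms(1) by (auto simp: le_mod_geq)
  then have "E n (0,e) (0,e)" unfolding E_def by auto
  then show False using assms(3) ext_C_phi[OF assms(1), of z "(0,e)" "(0,e)"] p by simp
qed



lemma wing_phi:
  "wing n (phi n a (p,L)) = phi n a ` Win p L"
proof
  show "wing n (phi n a (p,L)) \<subseteq> phi n a ` Win p L"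
  proof
    fix X assume "X \<in> wing n (phi n a (p,L))"
    then obtain s i where X: "X = (((a + p) mod n + s) mod n, i)" "1 \<le> i" "s + i \<le> L"
      unfolding wing_def phi_def by auto
    have "X = phi n a (p + s, i)" using X(1) by (simp add: phi_def mod_simps add.assoc)
    moreover have "(p + s, i) \<in> Win p L" using X by (auto simp: Win_def)
    ultimately show "X \<in> phi n a ` Win p L" by blast
  qed
  show "phi n a ` Win p L \<subseteq> wing n (phi n a (p,L))"
  proof
    fix X assume "X \<in> phi n a ` Win p L"
    then obtain s i where X: "X = phi n a (s,i)" "p \<le> s" "1 \<le> i" "s + i \<le> p + L"
      by (auto simp: Win_def)
    obtain d where d: "s = p + d" using X(2) le_Suc_ex by blast
    have "X = (((a + p) mod n + (s - p)) mod n, i)" using X d by (simp add: phi_def mod_simps add.assoc)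
    moreover have "1 \<le> i \<and> (s - p) + i \<le> L" using X by auto
    ultimately show "X \<in> wing n (phi n a (p,L))" unfolding wing_def phi_def by auto
  qed
qed

lemma inj_phi:
  assumes "b \<le> n"
  shows "inj_on (phi n a) (Win 0 b)"
proof
  fix x y assume x: "x \<in> Win 0 b" and y: "y \<in> Win 0 b" and e: "phi n a x = phi n a y"
  have n0: "0 < n" using x assms by (auto simp: Win_def)
  have am: "a mod n < n" using n0 by simp
  have "fst x < n" "fst y < n" using x y assms by (auto simp: Win_def)
  with am have r: "a mod n + fst x < 2*n" "a mod n + fst y < 2*n" by linarith+
  have "(a mod n + fst x) mod n = (a mod n + fst y) mod n" using e by (simp add: phi_def mod_simps)
  from mod_cases2[OF r this] have "fst x = fst y" using x y assms by (auto simp: Win_def)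
  then show "x = y" using e by (simp add: phi_def prod_eq_iff)
qed

lemma img_set:
  assumes "inj_on f U" "A \<subseteq> U" "x0 \<in> U"
  shows "{X \<in> T. X \<in> f ` U \<and> X \<noteq> f x0 \<and> X \<in> f ` A} = f ` ({x \<in> U. f x \<in> T} \<inter> A - {x0})"
  using assms unfolding inj_on_def by blast

lemma img_set2:
  assumes "inj_on f U" "x0 \<in> U"
  shows "{X \<in> T. X \<in> f ` U \<and> X \<noteq> f x0} = f ` ({x \<in> U. f x \<in> T} - {x0})"
  using assms unfolding inj_on_def by blast



theorem lemma2p5:
  fixes n :: nat and T :: "(nat \<times> nat) set" and Tk :: "nat \<times> nat"
  assumes "n \<ge> 2"
    and "maximal_rigid n T"
    and "Tk \<in> T"
  shows "card {X \<in> T. X \<in> wing n Tk} = ql Tk \<and>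
         (ql Tk > 1 \<longrightarrow>
         (\<exists>Y Z. subwing_triple n Tk Y Z \<and> summand_or_zero T Y \<and> summand_or_zero T Z \<and>
           {X \<in> T. X \<in> wing n Tk \<and> X \<noteq> Tk} \<subseteq> wing0 n Y \<union> wing0 n Z \<and>
           card {X \<in> T. X \<in> wing n Tk \<and> X \<noteq> Tk \<and> X \<in> wing0 n Y} = ql0 Y \<and>
           card {X \<in> T. X \<in> wing n Tk \<and> X \<noteq> Tk \<and> X \<in> wing0 n Z} = ql0 Z))"
proof -
  have n0: "0 < n" using assms(1) by simp
  have rig: "rigid n T" and mx: "\<And>X. X \<subseteq> indec n \<Longrightarrow> finite X \<Longrightarrow> rigid n (T \<union> X) \<Longrightarrow> X \<subseteq> T"
    using assms(2) unfolding maximal_rigid_def by auto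
  have Tind: "T \<subseteq> indec n" and finT: "finite T" and pw: "\<And>X Y. X \<in> T \<Longrightarrow> Y \<in> T \<Longrightarrow> ext_C_dim n X Y = 0"
    using rig unfolding rigid_def by auto
  obtain a b where Tk: "Tk = (a,b)" by (cases Tk)
  have a: "a < n" and b1: "1 \<le> b" using Tind assms(3) Tk by (auto simp: indec_def)
  have bn: "b < n" using rigid_ql[OF n0 a] pw[OF assms(3) assms(3)] Tk by simp
  have Tkp: "Tk = phi n a (0,b)" using Tk a by (simp add: phi_def)
  have inj: "inj_on (phi n a) (Win 0 b)" using inj_phi bn by simp
  have wTk: "wing n Tk = phi n a ` Win 0 b" using wing_phi Tkp by simp
  define F where "F = {x \<in> Win 0 b. phi n a x \<in> T}"
  have top: "(0,b) \<in> F" using assms(3) Tkp b1 unfolding F_def by (auto simp: Win_def)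
  have rel: "\<exists>u e. Z = phi n a (u,e) \<and> u < n \<and> 1 \<le> e \<and> e < n" if Z: "Z \<in> T" for Z
  proof -
    obtain z e where Ze: "Z = (z,e)" by (cases Z)
    have z: "z < n" "1 \<le> e" using Tind Z Ze by (auto simp: indec_def)
    have en: "e < n" using rigid_ql[OF n0 z(1)] pw[OF Z Z] Ze by simp
    define u where "u = (z + n - a) mod n"
    have "(a + u) mod n = (a + (z + n - a)) mod n" unfolding u_def by (simp add: mod_simps)
    also have "a + (z + n - a) = z + n * 1" using a by simp
    also have "(z + n * 1) mod n = z" using z by simp
    finally have "Z = phi n a (u,e)" using Ze by (simp add: phi_def)
    moreover have "u < n" unfolding u_def using n0 by simp
    ultimately show ?thesis using z en by blast
  qed
  have rm: "relmax F 0 b"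
    unfolding relmax_def
  proof (intro conjI ballI impI)
    show "F \<subseteq> Win 0 b" unfolding F_def by auto
    show "compat x y" if "x \<in> F" "y \<in> F" for x y
    proof -
      have "ext_C_dim n (phi n a x) (phi n a y) = 0" using pw that unfolding F_def by auto
      then have "\<not> E n x y \<and> \<not> E n y x" using ext_C_phi[OF n0] by simp
      then show ?thesis using E_lin[OF bn] that unfolding F_def compat_def by auto
    qed
    fix y assume y: "y \<in> Win 0 b" and cy: "\<forall>x\<in>F. compat x y"
    have cyy: "ext_C_dim n (phi n a y) (phi n a y) = 0"
      using E_lin[OF bn y y] ext_C_phi[OF n0] by (simp add: cr_def)
    have cZ: "ext_C_dim n Z (phi n a y) = 0" if Z: "Z \<in> T" for Z
    proof -
      obtain u e where ue: "Z = phi n a (u,e)" "u < n" "1 \<le> e" "e < n" using rel[OF Z] by blast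
      show ?thesis
      proof (cases "u + e \<le> b")
        case True
        then have "(u,e) \<in> F" using Z ue unfolding F_def by (auto simp: Win_def)
        then have "compat (u,e) y" using cy by auto
        then have "\<not> E n (u,e) y \<and> \<not> E n y (u,e)"
          using E_lin[OF bn _ y, of "(u,e)"] E_lin[OF bn y, of "(u,e)"] True ue
          unfolding compat_def by (auto simp: Win_def)
        then show ?thesis using ext_C_phi[OF n0] ue by simp
      next
        case False
        have "ext_C_dim n (phi n a (0,b)) (phi n a (u,e)) = 0"
          using pw[OF assms(3) Z] Tkp ue by simp
        then have h: "\<not> E n (0,b) (u,e)" "\<not> E n (u,e) (0,b)" using ext_C_phi[OF n0] by auto
        have "\<not> E n (u,e) y \<and> \<not> E n y (u,e)"
          using E_out[OF bn ue(2) ue(3) ue(4) _ y h] False by simp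
        then show ?thesis using ext_C_phi[OF n0] ue by simp
      qed
    qed
    have "rigid n (T \<union> {phi n a y})"
      unfolding rigid_def
    proof (intro conjI ballI)
      show "T \<union> {phi n a y} \<subseteq> indec n" using Tind y n0 by (auto simp: indec_def phi_def Win_def)
      show "finite (T \<union> {phi n a y})" using finT by simp
      fix X Y assume X: "X \<in> T \<union> {phi n a y}" and Y: "Y \<in> T \<union> {phi n a y}"
      show "ext_C_dim n X Y = 0"
      proof (cases "X \<in> T")
        case True
        then show ?thesis
        proof (cases "Y \<in> T")
          case True then show ?thesis using pw \<open>X \<in> T\<close> by blast
        next
          case False then have "Y = phi n a y" using Y by blast
          then show ?thesis using cZ[OF \<open>X \<in> T\<close>] by simp
        qed
      next
        case False then have Xe: "X = phi n a y" using X by blast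
        show ?thesis
        proof (cases "Y \<in> T")
          case True then show ?thesis using cZ[OF True] Xe ext_C_sym[of n X Y] by simp
        next
          case False then have "Y = phi n a y" using Y by blast
          then show ?thesis using cyy Xe by simp
        qed
      qed
    qed
    then have "{phi n a y} \<subseteq> T"
      using mx[of "{phi n a y}"] y n0 by (auto simp: indec_def phi_def Win_def)
    then show "y \<in> F" using y unfolding F_def by auto
  qed
  have Fsub: "F \<subseteq> Win 0 b" unfolding F_def by auto
  have setF: "{X \<in> T. X \<in> wing n Tk} = phi n a ` F" unfolding wTk F_def by auto
  have cardF: "card F = b" using card_relmax[OF rm top] .
  have part1: "card {X \<in> T. X \<in> wing n Tk} = ql Tk"
    using setF cardF card_image[OF inj_on_subset[OF inj Fsub]] Tk by (simp add: ql_def)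
  have sub_card: "card {X \<in> T. X \<in> wing n Tk \<and> X \<noteq> Tk \<and> X \<in> wing n (phi n a (q,M))} = M"
    if qM: "(q,M) \<in> F" "M < b" for q M
  proof -
    have WS: "Win q M \<subseteq> Win 0 b" using qM Fsub by (auto simp: Win_def)
    have "{X \<in> T. X \<in> wing n Tk \<and> X \<noteq> Tk \<and> X \<in> wing n (phi n a (q,M))}
       = phi n a ` (F \<inter> Win q M - {(0,b)})"
      unfolding wTk wing_phi Tkp F_def using img_set[OF inj WS, of "(0,b)" T] top Fsub by auto
    also have "F \<inter> Win q M - {(0,b)} = F \<inter> Win q M" using qM by (auto simp: Win_def)
    also have "card (phi n a ` (F \<inter> Win q M)) = card (F \<inter> Win q M)"
      by (rule card_image, rule inj_on_subset[OF inj]) (use Fsub in auto)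
    also have "\<dots> = M" using card_relmax[OF relmax_restrict[OF rm qM(1)]] qM(1) Fsub by (auto simp: Win_def)
    finally show ?thesis .
  qed
  have set2: "{X \<in> T. X \<in> wing n Tk \<and> X \<noteq> Tk} = phi n a ` (F - {(0,b)})"
    unfolding wTk unfolding Tkp F_def using img_set2[OF inj, of "(0,b)" T] top Fsub by auto
  have part2: "\<exists>Y Z. subwing_triple n Tk Y Z \<and> summand_or_zero T Y \<and> summand_or_zero T Z \<and>
           {X \<in> T. X \<in> wing n Tk \<and> X \<noteq> Tk} \<subseteq> wing0 n Y \<union> wing0 n Z \<and>
           card {X \<in> T. X \<in> wing n Tk \<and> X \<noteq> Tk \<and> X \<in> wing0 n Y} = ql0 Y \<and>
           card {X \<in> T. X \<in> wing n Tk \<and> X \<noteq> Tk \<and> X \<in> wing0 n Z} = ql0 Z"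
    if b2: "2 \<le> b"
  proof -
    have none: "card {X \<in> T. X \<in> wing n Tk \<and> X \<noteq> Tk \<and> X \<in> wing0 n None} = ql0 None"
      by (simp add: wing0_def ql0_def)
    from struct[OF rm top b2] show ?thesis
    proof (elim disjE exE conjE)
      fix c assume c: "1 \<le> c" "c \<le> b - 2" "(0,c) \<in> F" "(0+c+1, b-c-1) \<in> F"
        and cv: "F - {(0,b)} \<subseteq> Win 0 c \<union> Win (0+c+1) (b-c-1)"
      define Y where "Y = Some (phi n a (0,c))"
      define Z where "Z = Some (phi n a (0+c+1, b-c-1))"
      have Yv: "Y = Some (a,c)" using a unfolding Y_def by (simp add: phi_def)
      have Zv: "Z = Some ((a + c + 1) mod n, b - c - 1)" unfolding Z_def by (simp add: phi_def add.assoc)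
      have "subwing_triple n Tk Y Z"
        unfolding subwing_triple_def nondeg_subwing_triple_def Let_def Tk Yv Zv
        using c b2 bn by auto
      moreover have "summand_or_zero T Y" "summand_or_zero T Z"
        using c unfolding summand_or_zero_def Y_def Z_def F_def by auto
      moreover have "{X \<in> T. X \<in> wing n Tk \<and> X \<noteq> Tk} \<subseteq> wing0 n Y \<union> wing0 n Z"
        unfolding set2 Y_def Z_def wing0_def using cv by (auto simp: wing_phi)
      moreover have "card {X \<in> T. X \<in> wing n Tk \<and> X \<noteq> Tk \<and> X \<in> wing0 n Y} = ql0 Y"
        unfolding Y_def wing0_def ql0_def using sub_card[OF c(3)] c b2 by (simp add: phi_def ql_def)
      moreover have "card {X \<in> T. X \<in> wing n Tk \<and> X \<noteq> Tk \<and> X \<in> wing0 n Z} = ql0 Z"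
        unfolding Z_def wing0_def ql0_def using sub_card[OF c(4)] c b2 by (simp add: phi_def ql_def)
      ultimately show ?thesis by blast
    next
      assume c: "(0, b-1) \<in> F" "F - {(0,b)} \<subseteq> Win 0 (b-1)"
      define Y where "Y = Some (phi n a (0,b-1))"
      have Yv: "Y = Some (a,b-1)" using a unfolding Y_def by (simp add: phi_def)
      have "subwing_triple n Tk Y None"
        unfolding subwing_triple_def deg_subwing_triple_def Let_def Tk Yv
        using b2 bn by auto
      moreover have "summand_or_zero T Y" "summand_or_zero T None"
        using c unfolding summand_or_zero_def Y_def F_def by auto
      moreover have "{X \<in> T. X \<in> wing n Tk \<and> X \<noteq> Tk} \<subseteq> wing0 n Y \<union> wing0 n None"
        unfolding set2 Y_def wing0_def using c by (auto simp: wing_phi)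
      moreover have "card {X \<in> T. X \<in> wing n Tk \<and> X \<noteq> Tk \<and> X \<in> wing0 n Y} = ql0 Y"
        unfolding Y_def wing0_def ql0_def using sub_card[OF c(1)] b2 by (simp add: phi_def ql_def)
      ultimately show ?thesis using none by blast
    next
      assume c: "(0+1, b-1) \<in> F" "F - {(0,b)} \<subseteq> Win (0+1) (b-1)"
      define Z where "Z = Some (phi n a (0+1,b-1))"
      have Zv: "Z = Some ((a + 1) mod n, b-1)" unfolding Z_def by (simp add: phi_def)
      have "subwing_triple n Tk None Z"
        unfolding subwing_triple_def deg_subwing_triple_def Let_def Tk Zv
        using b2 bn by auto
      moreover have "summand_or_zero T None" "summand_or_zero T Z"
        using c unfolding summand_or_zero_def Z_def F_def by auto
      moreover have "{X \<in> T. X \<in> wing n Tk \<and> X \<noteq> Tk} \<subseteq> wing0 n None \<union> wing0 n Z"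
        unfolding set2 Z_def wing0_def using c by (auto simp: wing_phi)
      moreover have "card {X \<in> T. X \<in> wing n Tk \<and> X \<noteq> Tk \<and> X \<in> wing0 n Z} = ql0 Z"
        unfolding Z_def wing0_def ql0_def using sub_card[OF c(1)] b2 by (simp add: phi_def ql_def)
      ultimately show ?thesis using none by blast
    qed
  qed
  show ?thesis using part1 part2 Tk by (auto simp: ql_def)
qed


end
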